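(* Let $\mathcal X$ be a finite abelian group, $\mathcal Z$ a finite set, $P_{XZ}$ a distribution on $\mathcal X\times\mathcal Z$, and consider the conditional additive channel $W_{XZ|X}(x,z|x'):=P_{XZ}(x-x',z)$ from $\mathcal X$ to $\mathcal X\times\mathcal Z$. For any finite set $\mathcal M$, any distribution $P_M$ on $\mathcal M$ and any $c>0$, \[ P_{js}(P_M,W_{XZ|X})\le \sum_{\substack{(m,x,z):\ P_{XZ}(x,z)>0,\\ P_M(m)P_{X|Z}(x|z)\le c/|\mathcal X|}}P_M(m)P_{XZ}(x,z)\;+\;\frac1c, \] where $P_{X|Z}(x|z):=P_{XZ}(x,z)/P_Z(z)$ and $P_Z(z):=\sum_xP_{XZ}(x,z)$.
   Context: A code $\phi=(\mathsf e,\mathsf d)$ for a channel $W_{Y|X}$ consists of $\mathsf e:\mathcal M\to\mathcal X$ and $\mathsf d:\mathcal Y\to\mathcal M$ (here $\mathcal Y=\mathcal X\times\mathcal Z$); $P_{js}[\phi|P_M,W_{Y|X}]:=\sum_{m}P_M(m)W_{Y|X}(\{y:\mathsf d(y)\ne m\}|\mathsf e(m))$ and $P_{js}(P_M,W_{Y|X}):=\inf_\phi P_{js}[\phi|P_M,W_{Y|X}]$. *)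

theory Defs
  imports "HOL-Analysis.Analysis"
begin

definition is_distr :: "('a::finite \<Rightarrow> real) \<Rightarrow> bool" where
  "is_distr P \<longleftrightarrow> (\<forall>a. 0 \<le> P a) \<and> (\<Sum>a\<in>UNIV. P a) = 1"

text \<open>Error probability of the code (e, d) for message distribution PM and
  channel W (W x y = probability of output y given input x).\<close>
definition js_error ::
  "('m::finite \<Rightarrow> real) \<Rightarrow> ('a \<Rightarrow> 'b::finite \<Rightarrow> real) \<Rightarrow> ('m \<Rightarrow> 'a) \<Rightarrow> ('b \<Rightarrow> 'm) \<Rightarrow> real" where
  "js_error PM W e d = (\<Sum>m\<in>UNIV. PM m * (\<Sum>y\<in>{y. d y \<noteq> m}. W (e m) y))"

definition P_js ::
  "('m::finite \<Rightarrow> real) \<Rightarrow> ('a \<Rightarrow> 'b::finite \<Rightarrow> real) \<Rightarrow> real" where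
  "P_js PM W = (INF ed\<in>(UNIV :: (('m \<Rightarrow> 'a) \<times> ('b \<Rightarrow> 'm)) set). js_error PM W (fst ed) (snd ed))"

definition cond_add_channel ::
  "('x::ab_group_add \<times> 'z \<Rightarrow> real) \<Rightarrow> 'x \<Rightarrow> 'x \<times> 'z \<Rightarrow> real" where
  "cond_add_channel PXZ x' y = PXZ (fst y - x', snd y)"

definition marg_Z :: "('x::finite \<times> 'z \<Rightarrow> real) \<Rightarrow> 'z \<Rightarrow> real" where
  "marg_Z PXZ z = (\<Sum>x\<in>UNIV. PXZ (x, z))"

definition cond_X_Z :: "('x::finite \<times> 'z \<Rightarrow> real) \<Rightarrow> 'x \<Rightarrow> 'z \<Rightarrow> real" where
  "cond_X_Z PXZ x z = PXZ (x, z) / marg_Z PXZ z"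

end

theory Submission imports Defs begin

lemma shift_avg:
  fixes h :: "'x::{ab_group_add,finite} \<Rightarrow> real" and m m' :: "'m::finite"
  assumes "m \<noteq> m'"
  shows "(\<Sum>e\<in>(UNIV::('m\<Rightarrow>'x) set). h (e m + a - e m')) * real CARD('x)
     = real (card (UNIV::('m\<Rightarrow>'x) set)) * (\<Sum>x\<in>UNIV. h x)"
proof -
  have step: "(\<Sum>e\<in>(UNIV::('m\<Rightarrow>'x) set). h (e m + a - e m'))
      = (\<Sum>e\<in>(UNIV::('m\<Rightarrow>'x) set). h (e m + a - e m' - b))" for b
  proof -
    have "(\<Sum>e\<in>(UNIV::('m\<Rightarrow>'x) set). h (e m + a - e m'))
       = (\<Sum>e\<in>(UNIV::('m\<Rightarrow>'x) set). h ((e(m' := e m' + b)) m + a - (e(m' := e m' + b)) m'))"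
      by (rule sum.reindex_bij_witness[where i="\<lambda>e. e(m' := e m' + b)" and j="\<lambda>e. e(m' := e m' - b)"]) auto
    also have "\<dots> = (\<Sum>e\<in>UNIV. h (e m + a - e m' - b))" using assms by (simp add: algebra_simps)
    finally show ?thesis .
  qed
  have "(\<Sum>e\<in>(UNIV::('m\<Rightarrow>'x) set). h (e m + a - e m')) * real CARD('x)
      = (\<Sum>b\<in>(UNIV::'x set). \<Sum>e\<in>(UNIV::('m\<Rightarrow>'x) set). h (e m + a - e m' - b))"
    using step by simp
  also have "\<dots> = (\<Sum>e\<in>(UNIV::('m\<Rightarrow>'x) set). \<Sum>b\<in>UNIV. h (e m + a - e m' - b))"
    by (rule sum.swap)
  also have "\<dots> = (\<Sum>e\<in>(UNIV::('m\<Rightarrow>'x) set). \<Sum>x\<in>UNIV. h x)"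
  proof (rule sum.cong[OF refl])
    fix e :: "'m \<Rightarrow> 'x"
    show "(\<Sum>b\<in>UNIV. h (e m + a - e m' - b)) = (\<Sum>x\<in>UNIV. h x)"
      by (rule sum.reindex_bij_witness[where i="\<lambda>x. e m + a - e m' - x" and j="\<lambda>x. e m + a - e m' - x"]) auto
  qed
  also have "\<dots> = real (card (UNIV::('m\<Rightarrow>'x) set)) * (\<Sum>x\<in>UNIV. h x)" by simp
  finally show ?thesis .
qed

theorem mainTheorem4:
  fixes PXZ :: "('x::{ab_group_add,finite}) \<times> ('z::finite) \<Rightarrow> real"
    and PM :: "'m::finite \<Rightarrow> real"
    and c :: real
  assumes "is_distr PXZ" and "is_distr PM" and "c > 0"
  shows "P_js PM (cond_add_channel PXZ) \<le>
    (\<Sum>(m, x, z)\<in>{(m, x, z). PXZ (x, z) > 0 \<and>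
          PM m * cond_X_Z PXZ x z \<le> c / real (CARD('x))}.
        PM m * PXZ (x, z)) + 1 / c"
proof -
  define N where "N = real CARD('x)"
  have N0: "N > 0" unfolding N_def by simp
  have c0: "c > 0" by fact
  have PXZ0: "\<And>p. PXZ p \<ge> 0" and PXZ1: "(\<Sum>p\<in>UNIV. PXZ p) = 1"
    using assms(1) unfolding is_distr_def by auto
  have PM0: "\<And>m. PM m \<ge> 0" and PM1: "(\<Sum>m\<in>UNIV. PM m) = 1"
    using assms(2) unfolding is_distr_def by auto
  define cd where "cd x z = cond_X_Z PXZ x z" for x z
  have marg0: "marg_Z PXZ z \<ge> 0" for z unfolding marg_Z_def by (simp add: PXZ0 sum_nonneg)
  have cd0: "cd x z \<ge> 0" for x z unfolding cd_def cond_X_Z_def using marg0 PXZ0 by simp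
  have cdsum: "(\<Sum>x\<in>UNIV. cd x z) \<le> 1" for z
  proof -
    have "(\<Sum>x\<in>UNIV. cd x z) = marg_Z PXZ z / marg_Z PXZ z"
      unfolding cd_def cond_X_Z_def sum_divide_distrib[symmetric] by (simp add: marg_Z_def)
    also have "\<dots> \<le> 1" by (cases "marg_Z PXZ z = 0") auto
    finally show ?thesis .
  qed
  define ind where "ind b = (if b then 1 else 0 :: real)" for b
  have ind0: "ind b \<ge> 0" for b unfolding ind_def by simp
  define G where "G m p \<longleftrightarrow> PM m * cd (fst p) (snd p) > c / N" for m p
  define Q where "Q m' x z \<longleftrightarrow> PM m' * cd x z > c / N" for m' x z
  define d where "d e y = (SOME m'. Q m' (fst y - e m') (snd y))" for e :: "'m \<Rightarrow> 'x" and y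
  define F where "F = (UNIV :: ('m \<Rightarrow> 'x) set)"
  define A where "A = (\<Sum>m\<in>UNIV. \<Sum>p\<in>UNIV. PM m * PXZ p * ind (\<not> G m p))"
  define B where "B e = (\<Sum>m\<in>UNIV. \<Sum>p\<in>UNIV. PM m * PXZ p *
        (\<Sum>m'\<in>-{m}. ind (Q m' (e m + fst p - e m') (snd p))))" for e :: "'m \<Rightarrow> 'x"
  have K: "(\<Sum>m'\<in>UNIV. \<Sum>x\<in>UNIV. ind (Q m' x z)) \<le> N / c" for z
  proof -
    have "(\<Sum>m'\<in>UNIV. \<Sum>x\<in>UNIV. ind (Q m' x z)) \<le> (\<Sum>m'\<in>UNIV. \<Sum>x\<in>UNIV. PM m' * cd x z * (N / c))"
    proof (intro sum_mono)
      fix m' x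
      show "ind (Q m' x z) \<le> PM m' * cd x z * (N / c)"
      proof (cases "Q m' x z")
        case True
        then have "c / N < PM m' * cd x z" unfolding Q_def .
        then have "c / N * (N / c) < PM m' * cd x z * (N / c)"
          using N0 c0 by (intro mult_strict_right_mono) auto
        then show ?thesis using True N0 c0 unfolding ind_def by simp
      next
        case False
        then show ?thesis unfolding ind_def using PM0 cd0 N0 c0 by simp
      qed
    qed
    also have "\<dots> = (\<Sum>m'\<in>UNIV. PM m' * (\<Sum>x\<in>UNIV. cd x z)) * (N / c)"
      by (simp add: sum_distrib_left sum_distrib_right sum_divide_distrib)
    also have "\<dots> \<le> (\<Sum>m'\<in>UNIV. PM m') * (N / c)"
      using N0 c0 PM0 cdsum
      by (intro mult_right_mono sum_mono) (auto intro: mult_left_le)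
    also have "\<dots> = N / c" using PM1 by simp
    finally show ?thesis .
  qed
  have per_e: "js_error PM (cond_add_channel PXZ) e (d e) \<le> A + B e" for e
  proof -
    have inner: "(\<Sum>y\<in>{y. d e y \<noteq> m}. cond_add_channel PXZ (e m) y)
        = (\<Sum>p\<in>UNIV. PXZ p * ind (d e (e m + fst p, snd p) \<noteq> m))" for m
    proof -
      have "(\<Sum>y\<in>{y. d e y \<noteq> m}. cond_add_channel PXZ (e m) y)
          = (\<Sum>y\<in>UNIV. if d e y \<noteq> m then cond_add_channel PXZ (e m) y else 0)"
        using sum.inter_filter[of UNIV "cond_add_channel PXZ (e m)" "\<lambda>y. d e y \<noteq> m"] by simp
      also have "\<dots> = (\<Sum>p\<in>UNIV. PXZ p * ind (d e (e m + fst p, snd p) \<noteq> m))"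
        by (rule sum.reindex_bij_witness[where i="\<lambda>p. (e m + fst p, snd p)" and j="\<lambda>y. (fst y - e m, snd y)"])
           (auto simp: ind_def cond_add_channel_def)
      finally show ?thesis .
    qed
    have ptw: "ind (d e (e m + fst p, snd p) \<noteq> m)
        \<le> ind (\<not> G m p) + (\<Sum>m'\<in>-{m}. ind (Q m' (e m + fst p - e m') (snd p)))" for m p
    proof (cases "G m p")
      case False
      then have "ind (d e (e m + fst p, snd p) \<noteq> m) \<le> ind (\<not> G m p)" unfolding ind_def by simp
      moreover have "0 \<le> (\<Sum>m'\<in>-{m}. ind (Q m' (e m + fst p - e m') (snd p)))"
        by (intro sum_nonneg ind0)
      ultimately show ?thesis by linarith
    next
      case True
      have "Q m (fst (e m + fst p, snd p) - e m) (snd (e m + fst p, snd p))"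
        using True unfolding G_def Q_def by simp
      then have "Q (d e (e m + fst p, snd p)) (fst (e m + fst p, snd p) - e (d e (e m + fst p, snd p))) (snd (e m + fst p, snd p))"
        unfolding d_def by (rule someI)
      then have Qd: "Q (d e (e m + fst p, snd p)) (e m + fst p - e (d e (e m + fst p, snd p))) (snd p)"
        by simp
      show ?thesis
      proof (cases "d e (e m + fst p, snd p) = m")
        case True
        then show ?thesis using ind0 by (simp add: ind_def sum_nonneg)
      next
        case False
        let ?m2 = "d e (e m + fst p, snd p)"
        have "ind (Q ?m2 (e m + fst p - e ?m2) (snd p)) \<le> (\<Sum>m'\<in>-{m}. ind (Q m' (e m + fst p - e m') (snd p)))"
          by (rule member_le_sum) (use False ind0 in auto)
        then show ?thesis using Qd False unfolding ind_def by simp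
      qed
    qed
    have "js_error PM (cond_add_channel PXZ) e (d e)
        = (\<Sum>m\<in>UNIV. \<Sum>p\<in>UNIV. PM m * PXZ p * ind (d e (e m + fst p, snd p) \<noteq> m))"
      unfolding js_error_def inner by (simp add: sum_distrib_left mult.assoc)
    also have "\<dots> \<le> (\<Sum>m\<in>UNIV. \<Sum>p\<in>UNIV. PM m * PXZ p * (ind (\<not> G m p)
          + (\<Sum>m'\<in>-{m}. ind (Q m' (e m + fst p - e m') (snd p)))))"
      by (intro sum_mono mult_left_mono ptw mult_nonneg_nonneg PM0 PXZ0)
    also have "\<dots> = A + B e"
      unfolding A_def B_def by (simp add: distrib_left sum.distrib)
    finally show ?thesis .
  qed
  have sumB: "(\<Sum>e\<in>F. B e) \<le> real (card F) / c"
  proof -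
    have inner: "(\<Sum>e\<in>F. \<Sum>m'\<in>-{m}. ind (Q m' (e m + fst p - e m') (snd p))) \<le> real (card F) / c" for m p
    proof -
      have "(\<Sum>e\<in>F. \<Sum>m'\<in>-{m}. ind (Q m' (e m + fst p - e m') (snd p)))
          = (\<Sum>m'\<in>-{m}. \<Sum>e\<in>F. ind (Q m' (e m + fst p - e m') (snd p)))"
        by (rule sum.swap)
      also have "\<dots> = (\<Sum>m'\<in>-{m}. real (card F) / N * (\<Sum>x\<in>UNIV. ind (Q m' x (snd p))))"
      proof (rule sum.cong[OF refl])
        fix m' assume "m' \<in> - {m}"
        then have "m \<noteq> m'" by auto
        from shift_avg[OF this, of "\<lambda>u. ind (Q m' u (snd p))" "fst p"]
        show "(\<Sum>e\<in>F. ind (Q m' (e m + fst p - e m') (snd p))) = real (card F) / N * (\<Sum>x\<in>UNIV. ind (Q m' x (snd p)))"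
          unfolding F_def N_def using N0 N_def by (simp add: field_simps)
      qed
      also have "\<dots> \<le> (\<Sum>m'\<in>UNIV. real (card F) / N * (\<Sum>x\<in>UNIV. ind (Q m' x (snd p))))"
        by (rule sum_mono2) (use N0 in \<open>auto intro!: mult_nonneg_nonneg divide_nonneg_pos sum_nonneg ind0\<close>)
      also have "\<dots> = real (card F) / N * (\<Sum>m'\<in>UNIV. \<Sum>x\<in>UNIV. ind (Q m' x (snd p)))"
        by (simp add: sum_distrib_left)
      also have "\<dots> \<le> real (card F) / N * (N / c)"
        using K N0 by (intro mult_left_mono) auto
      also have "\<dots> = real (card F) / c" using N0 by simp
      finally show ?thesis .
    qed
    have "(\<Sum>e\<in>F. B e) = (\<Sum>m\<in>UNIV. \<Sum>p\<in>UNIV. PM m * PXZ p *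
        (\<Sum>e\<in>F. \<Sum>m'\<in>-{m}. ind (Q m' (e m + fst p - e m') (snd p))))"
    proof -
      have "(\<Sum>e\<in>F. B e) = (\<Sum>m\<in>UNIV. \<Sum>e\<in>F. \<Sum>p\<in>UNIV. PM m * PXZ p *
        (\<Sum>m'\<in>-{m}. ind (Q m' (e m + fst p - e m') (snd p))))"
        unfolding B_def by (rule sum.swap)
      also have "\<dots> = (\<Sum>m\<in>UNIV. \<Sum>p\<in>UNIV. \<Sum>e\<in>F. PM m * PXZ p *
        (\<Sum>m'\<in>-{m}. ind (Q m' (e m + fst p - e m') (snd p))))"
        by (rule sum.cong[OF refl], rule sum.swap)
      finally show ?thesis by (simp add: sum_distrib_left)
    qed
    also have "\<dots> \<le> (\<Sum>m\<in>UNIV. \<Sum>p\<in>UNIV. PM m * PXZ p * (real (card F) / c))"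
      by (intro sum_mono mult_left_mono inner mult_nonneg_nonneg PM0 PXZ0)
    also have "\<dots> = (\<Sum>m\<in>UNIV. \<Sum>p\<in>UNIV. PM m * PXZ p) * (real (card F) / c)"
      by (simp only: sum_distrib_right)
    also have "\<dots> = real (card F) / c"
      using PM1 PXZ1 by (simp add: sum_distrib_left[symmetric])
    finally show ?thesis .
  qed
  define S where "S = {(m, x, z). PXZ (x, z) > 0 \<and>
          PM m * cond_X_Z PXZ x z \<le> c / real (CARD('x))}"
  have AS: "A = (\<Sum>(m, x, z)\<in>S. PM m * PXZ (x, z))"
  proof -
    have "A = (\<Sum>q\<in>UNIV. PM (fst q) * PXZ (snd q) * ind (\<not> G (fst q) (snd q)))"
      unfolding A_def by (simp add: sum.cartesian_product UNIV_Times_UNIV[symmetric] case_prod_beta del: UNIV_Times_UNIV)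
    also have "\<dots> = (\<Sum>q\<in>UNIV. if q \<in> S then (case q of (m, x, z) \<Rightarrow> PM m * PXZ (x, z)) else 0)"
    proof (rule sum.cong[OF refl])
      fix q :: "'m \<times> 'x \<times> 'z"
      obtain m x z where q: "q = (m, x, z)" by (cases q) auto
      show "PM (fst q) * PXZ (snd q) * ind (\<not> G (fst q) (snd q))
          = (if q \<in> S then (case q of (m, x, z) \<Rightarrow> PM m * PXZ (x, z)) else 0)"
        using PXZ0[of "(x,z)"] unfolding q S_def G_def ind_def cd_def N_def
        by (auto simp: not_less)
    qed
    also have "\<dots> = (\<Sum>(m, x, z)\<in>S. PM m * PXZ (x, z))"
      by (simp add: sum.If_cases)
    finally show ?thesis .
  qed
  have Fne: "F \<noteq> {}" "finite F" unfolding F_def by auto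
  have "\<exists>e\<in>F. js_error PM (cond_add_channel PXZ) e (d e) \<le> A + 1 / c"
  proof (rule ccontr)
    assume "\<not> ?thesis"
    then have lt: "\<And>e. e \<in> F \<Longrightarrow> A + 1 / c < js_error PM (cond_add_channel PXZ) e (d e)" by auto
    have "(\<Sum>e\<in>F. A + 1 / c) < (\<Sum>e\<in>F. js_error PM (cond_add_channel PXZ) e (d e))"
      using Fne lt by (intro sum_strict_mono) auto
    also have "\<dots> \<le> (\<Sum>e\<in>F. A + B e)" by (intro sum_mono per_e)
    also have "\<dots> \<le> real (card F) * A + real (card F) / c" using sumB by (simp add: sum.distrib)
    also have "\<dots> = (\<Sum>e\<in>F. A + 1 / c)" by (simp add: distrib_left)
    finally show False by simp
  qed
  then obtain e where e: "js_error PM (cond_add_channel PXZ) e (d e) \<le> A + 1 / c" by auto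
  have "P_js PM (cond_add_channel PXZ) \<le> js_error PM (cond_add_channel PXZ) (fst (e, d e)) (snd (e, d e))"
    unfolding P_js_def
    by (rule cINF_lower) (auto intro: bdd_below_finite)
  also have "\<dots> \<le> A + 1 / c" using e by simp
  finally show ?thesis using AS unfolding S_def by simp
qed
end
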